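(* Let $\mathcal V=\{v^{(1)},\dots,v^{(p)}\}\subset(\mathbb{R}\cup\{-\infty\})^n$ and let $V$ be the $n\times p$ matrix with columns $v^{(k)}$; assume $V$ has no row and no column identically equal to $-\infty$. Let $T$ be the operator $$T_i(x)=\inf_{k\in[p],\,V_{ik}\neq-\infty}\Big[-V_{ik}+\max_{j\in[n],\,j\neq i}(V_{jk}+x_j)\Big],\qquad i\in[n].$$ Then for all $\lambda\in[-\infty,0]$ and all $b\in(\mathbb{R}\cup\{-\infty\})^n$ not identically $-\infty$, $$T(b)\ge\lambda+b\iff\operatorname{dist}_H(\mathcal V,\mathcal H_b)\le-\lambda.$$
   Context: $\mathbb{R}_{\max}=\mathbb{R}\cup\{-\infty\}$, $-\infty+c=-\infty$, $\max\emptyset=-\infty$. For $b$ not identically $-\infty$, $\mathcal H_b=\{y\in\mathbb{R}_{\max}^n:\max_i(b_i+y_i)\text{ is achieved at least twice}\}$. Hilbert's projective metric: $d(x,y)=\inf\{\lambda-\mu:\lambda,\mu\in\mathbb{R},\ \mu+y_i\le x_i\le\lambda+y_i\ \forall i\}\in[0,+\infty]$ (and $d(\bot,\bot)=0$). For sets $A,B$, $\operatorname{dist}_H(A,B)=\sup_{a\in A}\inf_{y\in B}d(a,y)$. *)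

theory Defs
  imports Complex_Main "HOL-Library.Extended_Real"
begin

text \<open>Max-plus semiring R_max = R \<union> {-\<infinity>} is modelled inside ereal, by requiring
  the value +\<infinity> never to occur.\<close>

definition rmax_vec :: "('n \<Rightarrow> ereal) \<Rightarrow> bool" where
  "rmax_vec x \<longleftrightarrow> (\<forall>i. x i \<noteq> \<infinity>)"

definition trop_hyperplane :: "('n::finite \<Rightarrow> ereal) \<Rightarrow> ('n \<Rightarrow> ereal) set" where
  "trop_hyperplane b = {y. rmax_vec y \<and>
     (\<exists>i j. i \<noteq> j \<and> b i + y i = (SUP k. b k + y k) \<and> b j + y j = (SUP k. b k + y k))}"

text \<open>Hilbert's projective metric, with d(bot,bot) = 0 and inf of the empty set = +\<infinity>.\<close>
definition hilbert_dist :: "('n \<Rightarrow> ereal) \<Rightarrow> ('n \<Rightarrow> ereal) \<Rightarrow> ereal" where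
  "hilbert_dist x y =
     (if (\<forall>i. x i = -\<infinity>) \<and> (\<forall>i. y i = -\<infinity>) then 0
      else Inf {ereal (l - m) | l m. \<forall>i. ereal m + y i \<le> x i \<and> x i \<le> ereal l + y i})"

definition hausdorff_dir :: "('n \<Rightarrow> ereal) set \<Rightarrow> ('n \<Rightarrow> ereal) set \<Rightarrow> ereal" where
  "hausdorff_dir A B = (SUP a\<in>A. INF y\<in>B. hilbert_dist a y)"

definition columns :: "('n \<Rightarrow> 'p \<Rightarrow> ereal) \<Rightarrow> ('n \<Rightarrow> ereal) set" where
  "columns V = {(\<lambda>i. V i k) | k. True}"

text \<open>The operator T; max over an empty set is -\<infinity> (= Sup {} in ereal).\<close>
definition opT :: "('n \<Rightarrow> 'p \<Rightarrow> ereal) \<Rightarrow> ('n \<Rightarrow> ereal) \<Rightarrow> 'n \<Rightarrow> ereal" where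
  "opT V x i = (INF k\<in>{k. V i k \<noteq> -\<infinity>}. - V i k + (SUP j\<in>{j. j \<noteq> i}. V j k + x j))"

end

theory Submission
  imports Defs
begin

lemma lower:
  fixes v b y :: "'n::finite \<Rightarrow> ereal"
  assumes y: "y \<in> trop_hyperplane b" and vi: "v i = ereal vi" and bi: "b i = ereal bi"
    and vinf: "\<forall>j. v j \<noteq> \<infinity>" and rb: "rmax_vec b"
    and mc: "(SUP j\<in>{j. j\<noteq>i}. v j + b j) < ereal c"
    and lm: "\<forall>j. ereal m + y j \<le> v j \<and> v j \<le> ereal l + y j"
  shows "vi + bi - c < l - m"
proof -
  from y obtain s s' where ss: "s \<noteq> s'" "b s + y s = (SUP k. b k + y k)"
      "b s' + y s' = (SUP k. b k + y k)" and ry: "rmax_vec y"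
    unfolding trop_hyperplane_def by blast
  obtain t where t: "t \<noteq> i" "b t + y t = (SUP k. b k + y k)" using ss by metis
  have "b i + y i \<le> (SUP k. b k + y k)" by (rule SUP_upper) simp
  hence t1: "b i + y i \<le> b t + y t" using t by simp
  have t2: "v t + b t \<le> (SUP j\<in>{j. j\<noteq>i}. v j + b j)" using t(1) by (intro SUP_upper) simp
  have yi: "ereal vi \<le> ereal l + y i" using lm vi by metis
  have "y i \<noteq> \<infinity>" using ry unfolding rmax_vec_def by simp
  then obtain yi where yi': "y i = ereal yi" using yi by (cases "y i") auto
  have "b t \<noteq> \<infinity>" "y t \<noteq> \<infinity>" using ry rb unfolding rmax_vec_def by auto
  moreover have "b t \<noteq> -\<infinity>" "y t \<noteq> -\<infinity>" using t1 bi yi' ry rb unfolding rmax_vec_def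
    by (cases "b t"; cases "y t"; auto)+
  ultimately obtain bt yt where bt: "b t = ereal bt" and yt: "y t = ereal yt"
    by (cases "b t"; cases "y t") auto
  have vt0: "ereal m + ereal yt \<le> v t" using lm yt by metis
  then obtain vt where vt: "v t = ereal vt" using vinf by (cases "v t") auto
  from t1 bi yi' bt yt have "bi + yi \<le> bt + yt" by simp
  moreover from vt0 vt have "m + yt \<le> vt" by simp
  moreover have "vt + bt < c" using le_less_trans[OF t2 mc] vt bt by simp
  moreover from yi yi' have "vi \<le> l + yi" by simp
  ultimately show ?thesis by linarith
qed

lemma col_iff:
  fixes v b :: "'n::finite \<Rightarrow> ereal" and \<mu> :: real
  assumes vinf: "\<forall>i. v i \<noteq> \<infinity>" and vnb: "\<exists>i. v i \<noteq> -\<infinity>" and mu: "\<mu> \<ge> 0"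
    and rb: "rmax_vec b" and bnb: "\<exists>i. b i \<noteq> -\<infinity>"
  shows "(\<forall>i. v i \<noteq> -\<infinity> \<longrightarrow> ereal (-\<mu>) + b i \<le> - v i + (SUP j\<in>{j. j \<noteq> i}. v j + b j))
     \<longleftrightarrow> (INF y\<in>trop_hyperplane b. hilbert_dist v y) \<le> ereal \<mu>"
proof
  assume H: "\<forall>i. v i \<noteq> -\<infinity> \<longrightarrow> ereal (-\<mu>) + b i \<le> - v i + (SUP j\<in>{j. j \<noteq> i}. v j + b j)"
  have binf: "\<And>i. b i \<noteq> \<infinity>" using rb unfolding rmax_vec_def by auto
  show "(INF y\<in>trop_hyperplane b. hilbert_dist v y) \<le> ereal \<mu>"
  proof (cases "\<forall>i. v i + b i = -\<infinity>")
    case True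
    obtain i0 where i0: "b i0 \<noteq> -\<infinity>" using bnb by auto
    obtain i1 where i1: "v i1 \<noteq> -\<infinity>" using vnb by auto
    have ne: "i0 \<noteq> i1"
    proof
      assume "i0 = i1"
      then have "v i0 + b i0 \<noteq> -\<infinity>" using i0 i1 vinf binf
        by (cases "v i0"; cases "b i0") auto
      then show False using True by auto
    qed
    have allm: "\<And>k. b k + v k = -\<infinity>" using True by (simp add: add.commute)
    have S: "(SUP k. b k + v k) = -\<infinity>" unfolding allm by simp
    have vH: "v \<in> trop_hyperplane b"
      unfolding trop_hyperplane_def rmax_vec_def using vinf ne allm S by auto
    have "hilbert_dist v v \<le> 0"
    proof -
      have "\<forall>i. ereal 0 + v i \<le> v i \<and> v i \<le> ereal 0 + v i" by (simp add: zero_ereal_def[symmetric])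
      then have "ereal (0 - 0) \<in> {ereal (l - m) | l m. \<forall>i. ereal m + v i \<le> v i \<and> v i \<le> ereal l + v i}"
        by blast
      then have "Inf {ereal (l - m) | l m. \<forall>i. ereal m + v i \<le> v i \<and> v i \<le> ereal l + v i} \<le> 0"
        by (metis (no_types, lifting) Inf_lower diff_self zero_ereal_def)
      then show ?thesis unfolding hilbert_dist_def by auto
    qed
    then show ?thesis using vH mu by (meson INF_lower2 order_trans ereal_less_eq(5) zero_ereal_def)
  next
    case False
    define a where "a = (\<lambda>k. v k + b k)"
    obtain t where t: "a t = Max (range a)" using Max_in[of "range a"] by (metis finite_UNIV finite_imageI imageE image_is_empty UNIV_not_empty)
    have tmax: "\<And>k. a k \<le> a t" unfolding t by simp
    from False obtain i where "a i \<noteq> -\<infinity>" unfolding a_def by auto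
    then have "a t \<noteq> -\<infinity>" using tmax[of i] by auto
    then obtain vt bt where vt: "v t = ereal vt" and bt: "b t = ereal bt"
      using vinf binf unfolding a_def by (cases "v t"; cases "b t") auto
    define m2 where "m2 = (SUP j\<in>{j. j \<noteq> t}. a j)"
    have Ht: "ereal (-\<mu>) + ereal bt \<le> - ereal vt + m2" using H[rule_format, of t] vt bt unfolding m2_def a_def by simp
    have "m2 \<noteq> -\<infinity>" using Ht by auto
    hence nemp: "{j. j \<noteq> t} \<noteq> {}" unfolding m2_def by (metis SUP_empty bot_ereal_def)
    have m2M: "m2 = Max (a ` {j. j \<noteq> t})" unfolding m2_def
      using nemp by (intro cSup_eq_Max) auto
    have "m2 \<in> a ` {j. j \<noteq> t}" unfolding m2M using nemp by (intro Max_in) auto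
    then obtain s where s: "s \<noteq> t" "a s = m2" by auto
    have "m2 \<le> a t" using s tmax by metis
    then obtain r where r: "m2 = ereal r" using \<open>m2 \<noteq> -\<infinity>\<close> vt bt unfolding a_def
      by (cases m2) auto
    define \<delta> where "\<delta> = vt + bt - r"
    have d1: "\<delta> \<le> \<mu>" using Ht r unfolding \<delta>_def by simp
    have d0: "0 \<le> \<delta>" using \<open>m2 \<le> a t\<close> r vt bt unfolding \<delta>_def a_def by simp
    define y where "y = v(t := ereal (vt - \<delta>))"
    have ub: "\<And>k. k \<noteq> t \<Longrightarrow> a k \<le> m2" unfolding m2_def by (intro SUP_upper) auto
    have byt: "b t + y t = ereal r" unfolding y_def using bt by (simp add: \<delta>_def)
    have bys: "b s + y s = ereal r" unfolding y_def using s r by (simp add: a_def add.commute)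
    have SUPy: "(SUP k. b k + y k) = ereal r"
    proof (rule antisym)
      show "(SUP k. b k + y k) \<le> ereal r"
      proof (rule SUP_least)
        fix k assume "k \<in> (UNIV::'n set)"
        show "b k + y k \<le> ereal r"
        proof (cases "k = t")
          case True then show ?thesis using byt by simp
        next
          case False then show ?thesis using ub[of k] r unfolding y_def a_def
            by (simp add: add.commute)
        qed
      qed
      show "ereal r \<le> (SUP k. b k + y k)" unfolding bys[symmetric] by (rule SUP_upper) simp
    qed
    have yH: "y \<in> trop_hyperplane b"
      unfolding trop_hyperplane_def rmax_vec_def using vinf s(1) byt bys SUPy
      unfolding y_def by auto
    have "hilbert_dist v y \<le> ereal \<delta>"
    proof -
      have "\<forall>i. ereal 0 + y i \<le> v i \<and> v i \<le> ereal \<delta> + y i"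
      proof
        fix i show "ereal 0 + y i \<le> v i \<and> v i \<le> ereal \<delta> + y i"
        proof (cases "i = t")
          case True then show ?thesis using vt d0 unfolding y_def by simp
        next
          case False then show ?thesis using d0 vinf[rule_format, of i] unfolding y_def
            by (cases "v i") auto
        qed
      qed
      then have "ereal (\<delta> - 0) \<in> {ereal (l - m) | l m. \<forall>i. ereal m + y i \<le> v i \<and> v i \<le> ereal l + y i}"
        by blast
      then have "Inf {ereal (l - m) | l m. \<forall>i. ereal m + y i \<le> v i \<and> v i \<le> ereal l + y i} \<le> ereal \<delta>"
        by (metis (no_types, lifting) Inf_lower diff_zero)
      then show ?thesis unfolding hilbert_dist_def using d0 by auto
    qed
    then show ?thesis using yH d1 by (meson INF_lower2 order_trans ereal_less_eq(3))
  qed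
next
  assume R: "(INF y\<in>trop_hyperplane b. hilbert_dist v y) \<le> ereal \<mu>"
  show "\<forall>i. v i \<noteq> -\<infinity> \<longrightarrow> ereal (-\<mu>) + b i \<le> - v i + (SUP j\<in>{j. j \<noteq> i}. v j + b j)"
  proof (intro allI impI, rule ccontr)
    fix i assume vi0: "v i \<noteq> -\<infinity>"
      and C: "\<not> ereal (-\<mu>) + b i \<le> - v i + (SUP j\<in>{j. j \<noteq> i}. v j + b j)"
    obtain vi where vi: "v i = ereal vi" using vi0 vinf by (cases "v i") auto
    have "b i \<noteq> -\<infinity>" using C by auto
    then obtain bi where bi: "b i = ereal bi" using rb unfolding rmax_vec_def by (cases "b i") auto
    define M where "M = (SUP j\<in>{j. j \<noteq> i}. v j + b j)"
    have C0: "- ereal vi + M < ereal (-\<mu>) + ereal bi" using C vi bi unfolding M_def by (simp add: not_le)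
    have C': "M < ereal (vi + bi - \<mu>)" using C0
      by (cases M) simp_all
    obtain c where c1: "M < ereal c" and c2: "c < vi + bi - \<mu>"
    proof (cases M)
      case (real x)
      then show ?thesis using C' that[of "(x + (vi + bi - \<mu>))/2"] by auto
    next
      case PInf then show ?thesis using C' by simp
    next
      case MInf then show ?thesis using that[of "vi + bi - \<mu> - 1"] by simp
    qed
    have LB: "ereal (vi + bi - c) \<le> (INF y\<in>trop_hyperplane b. hilbert_dist v y)"
    proof (rule INF_greatest)
      fix y assume y: "y \<in> trop_hyperplane b"
      have "ereal (vi + bi - c) \<le> Inf {ereal (l - m) | l m. \<forall>i. ereal m + y i \<le> v i \<and> v i \<le> ereal l + y i}"
      proof (rule Inf_greatest)
        fix z assume "z \<in> {ereal (l - m) | l m. \<forall>i. ereal m + y i \<le> v i \<and> v i \<le> ereal l + y i}"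
        then obtain l m where z: "z = ereal (l - m)" and lm: "\<forall>i. ereal m + y i \<le> v i \<and> v i \<le> ereal l + y i"
          by blast
        have "vi + bi - c < l - m"
          using lower[OF y vi bi vinf rb _ lm] c1 unfolding M_def by blast
        then show "ereal (vi + bi - c) \<le> z" using z by simp
      qed
      then show "ereal (vi + bi - c) \<le> hilbert_dist v y" unfolding hilbert_dist_def using vi by auto
    qed
    then show False using order_trans[OF LB R] c2 by simp
  qed
qed


theorem lemma4p5:
  fixes V :: "'n::finite \<Rightarrow> 'p::finite \<Rightarrow> ereal"
    and b :: "'n \<Rightarrow> ereal" and lam :: ereal
  assumes V_rmax: "\<forall>i k. V i k \<noteq> \<infinity>"
    and no_row: "\<forall>i. \<exists>k. V i k \<noteq> -\<infinity>"
    and no_col: "\<forall>k. \<exists>i. V i k \<noteq> -\<infinity>"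
    and lam_le: "lam \<le> 0"
    and b_rmax: "rmax_vec b"
    and b_nonbot: "\<exists>i. b i \<noteq> -\<infinity>"
  shows "(\<forall>i. lam + b i \<le> opT V b i) \<longleftrightarrow>
         hausdorff_dir (columns V) (trop_hyperplane b) \<le> - lam"
proof (cases lam)
  case (real r)
  have r0: "r \<le> 0" using lam_le real by simp
  have L: "(\<forall>i. lam + b i \<le> opT V b i) \<longleftrightarrow>
     (\<forall>k. \<forall>i. V i k \<noteq> -\<infinity> \<longrightarrow> ereal (-(-r)) + b i \<le> - V i k + (SUP j\<in>{j. j \<noteq> i}. V j k + b j))"
    unfolding opT_def real by (auto simp: le_INF_iff)
  have R: "hausdorff_dir (columns V) (trop_hyperplane b) \<le> - lam \<longleftrightarrow>
     (\<forall>k. (INF y\<in>trop_hyperplane b. hilbert_dist (\<lambda>i. V i k) y) \<le> ereal (-r))"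
    unfolding hausdorff_dir_def columns_def real by (auto simp: SUP_le_iff)
  have K: "\<And>k. (\<forall>i. V i k \<noteq> -\<infinity> \<longrightarrow> ereal (-(-r)) + b i \<le> - V i k + (SUP j\<in>{j. j \<noteq> i}. V j k + b j))
     \<longleftrightarrow> (INF y\<in>trop_hyperplane b. hilbert_dist (\<lambda>i. V i k) y) \<le> ereal (-r)"
  proof -
    fix k
    show "?thesis k"
      using col_iff[of "\<lambda>i. V i k" "-r" b] V_rmax no_col r0 b_rmax b_nonbot by simp
  qed
  show ?thesis unfolding L R using K by blast
next
  case PInf then show ?thesis using lam_le by simp
next
  case MInf
  have "\<And>i. b i \<noteq> \<infinity>" using b_rmax unfolding rmax_vec_def by auto
  then have e: "\<And>i. lam + b i = -\<infinity>" using MInf by (metis ereal_MInfty_eq_plus)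
  have "\<forall>i. lam + b i \<le> opT V b i" unfolding e by simp
  moreover have "hausdorff_dir (columns V) (trop_hyperplane b) \<le> - lam" using MInf by simp
  ultimately show ?thesis by blast
qed

end
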